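(* In the setting described in the context, there exists an open neighbourhood $U_{2,0}$ of $P_2$, relatively compact in $U_2$, such that $\widetilde{\Gamma}'_t=\{0\}\times\mathbb{Z}$ for all $t\in U_{2,0}$.
   Context: Write $\mathbf{e}(x)=\exp(2\pi\sqrt{-1}x)$. Let $\tau\in\mathbb{C}$ with $\mathrm{Im}\,\tau>0$, $X=\mathbb{C}/(\mathbb{Z}+\mathbb{Z}\tau)$, $P_1\neq P_2\in X$, and $X_{\mathfrak m}$ the curve obtained by identifying $P_1,P_2$ to an ordinary double point, $\rho:X\to X_{\mathfrak m}$. Let $\alpha,\beta$ be a canonical homology basis of $X$ (curves avoiding $P_1,P_2$), $X^\circ$ the simply connected domain obtained by cutting $X$ along them, $U_1,U_2\subset X^\circ$ small disks around $P_1,P_2$, $t$ a local coordinate on $\overline{U_2}$ with $t(P_2)=0$ (points of $U_2$ are identified with their $t$-values), and $\gamma_1$ a small anticlockwise circle around $P_1$. Let $\omega,\eta$ be the basis of the generalized differentials of $X_{\mathfrak m}$ (meromorphic 1-forms on $X$, holomorphic off $\{P_1,P_2\}$, at most simple poles there, residues summing to $0$) with $\rho^*\omega$ holomorphic and $(\int_{\gamma_1},\int_\alpha,\int_\beta)$ of $\rho^*\omega$ and $\rho^*\eta$ equal to $(0,1,\tau)$ and $(1,r_1,r_2)$, $r_1,r_2\in\mathbb{R}$. Fix $P_0\in X^\circ\setminus\{P_1,P_2\}$ and let $\varphi_1(P)=\int_{P_0}^P\rho^*\omega$, $\varphi_2(P)=\int_{P_0}^P\rho^*\eta$. Let $\theta{a\brack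 b}(z)=\sum_{n\in\mathbb{Z}}\mathbf{e}[\tfrac12(n+a)^2\tau+(n+a)(z+b)]$, $\Theta(z,w)=\theta{0\brack0}(z)+\theta{-r_1\brack r_2}(z)\mathbf{e}(w)$, and $\mathfrak{T}_c(P)=\Theta(\varphi_1(P)-c_1,\varphi_2(P)-c_2)$ for $c=(c_1,c_2)\in\mathbb{C}^2$; it has a simple pole at $P_2$. On $\overline{U_2}$ write $\mathfrak{T}_c(t)=c_{-1}/t+h_2(t;c)$ and $\mathfrak{T}_c'(t)/\mathfrak{T}_c(t)=-1/t+h_3(t;c)$ with $h_2,h_3$ holomorphic in $t$. Define $d'(t):\mathbb{C}^2\to\mathbb{C}^2$ by $d'(t)(c)=(c_1,\frac{1}{2\pi\sqrt{-1}}h_3(t;c))$ and its period group $\widetilde{\Gamma}'_t=\{\tilde c\in\mathbb{C}^2: d'(t)(c+\tilde c)=d'(t)(c)\text{ for all }c\in\mathbb{C}^2\}$. *)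

theory Defs
  imports "HOL-Complex_Analysis.Complex_Analysis"
begin

text \<open>Concrete model: the universal cover C of X = C/(Z + Z tau), coordinates
  normalised so that the pullback of omega is dz.  Points of X are represented
  by their lifts; the cut domain X-circ is represented by a lift D in C.\<close>

definition ee :: "complex \<Rightarrow> complex" where
  "ee x = exp (2 * of_real pi * \<i> * x)"

definition lattice :: "complex \<Rightarrow> complex set" where
  "lattice \<tau> = {of_int m + of_int n * \<tau> | m n. True}"

definition pole_set :: "complex \<Rightarrow> complex \<Rightarrow> complex \<Rightarrow> complex set" where
  "pole_set \<tau> p1 p2 = {p1 + l | l. l \<in> lattice \<tau>} \<union> {p2 + l | l. l \<in> lattice \<tau>}"

definition cut_set :: "complex \<Rightarrow> (real \<Rightarrow> complex) \<Rightarrow> (real \<Rightarrow> complex) \<Rightarrow> complex set" where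
  "cut_set \<tau> \<alpha> \<beta> = {l + z | l z. l \<in> lattice \<tau> \<and> z \<in> path_image \<alpha> \<union> path_image \<beta>}"

definition theta_char :: "complex \<Rightarrow> complex \<Rightarrow> complex \<Rightarrow> complex \<Rightarrow> complex" where
  "theta_char \<tau> a b z =
     infsum (\<lambda>n::int. ee ((1/2) * (of_int n + a)^2 * \<tau> + (of_int n + a) * (z + b))) UNIV"

definition Theta :: "complex \<Rightarrow> real \<Rightarrow> real \<Rightarrow> complex \<Rightarrow> complex \<Rightarrow> complex" where
  "Theta \<tau> r1 r2 z w = theta_char \<tau> 0 0 z + theta_char \<tau> (- of_real r1) (of_real r2) z * ee w"

text \<open>phi2(P) = integral of rho^* eta from P0 to P along a path in X-circ minus the poles
  (well defined modulo Z; Theta only depends on ee of its second argument).\<close>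
definition phi2 :: "(complex \<Rightarrow> complex) \<Rightarrow> complex set \<Rightarrow> complex \<Rightarrow> complex \<Rightarrow> complex" where
  "phi2 g S p0 z = (SOME v. \<exists>\<gamma>. valid_path \<gamma> \<and> pathstart \<gamma> = p0 \<and> pathfinish \<gamma> = z \<and>
                       path_image \<gamma> \<subseteq> S \<and> (g has_contour_integral v) \<gamma>)"

text \<open>frak T_c(P) = Theta(phi1(P) - c1, phi2(P) - c2), with phi1(P) = P - P0 (integral of dz).\<close>
definition frakT :: "complex \<Rightarrow> real \<Rightarrow> real \<Rightarrow> (complex \<Rightarrow> complex) \<Rightarrow> complex set \<Rightarrow> complex
      \<Rightarrow> complex \<times> complex \<Rightarrow> complex \<Rightarrow> complex" where
  "frakT \<tau> r1 r2 g S p0 c z = Theta \<tau> r1 r2 (z - p0 - fst c) (phi2 g S p0 z - snd c)"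

text \<open>h3(s; c) = T_c'(s)/T_c(s) + 1/s in the local coordinate t (inverse of t on K);
  at s = 0 defined as the limit (removable singularity).\<close>
definition h3 :: "complex \<Rightarrow> real \<Rightarrow> real \<Rightarrow> (complex \<Rightarrow> complex) \<Rightarrow> complex set \<Rightarrow> complex
      \<Rightarrow> (complex \<Rightarrow> complex) \<Rightarrow> complex set \<Rightarrow> complex \<times> complex \<Rightarrow> complex \<Rightarrow> complex" where
  "h3 \<tau> r1 r2 g S p0 t K c s =
     (let Tt = (\<lambda>y. frakT \<tau> r1 r2 g S p0 c (inv_into K t y));
          F = (\<lambda>x. deriv Tt x / Tt x + 1 / x)
      in if s = 0 then Lim (at 0) F else F s)"

definition dprime :: "complex \<Rightarrow> real \<Rightarrow> real \<Rightarrow> (complex \<Rightarrow> complex) \<Rightarrow> complex set \<Rightarrow> complex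
      \<Rightarrow> (complex \<Rightarrow> complex) \<Rightarrow> complex set \<Rightarrow> complex \<Rightarrow> complex \<times> complex \<Rightarrow> complex \<times> complex" where
  "dprime \<tau> r1 r2 g S p0 t K s c =
     (fst c, h3 \<tau> r1 r2 g S p0 t K c s / (2 * of_real pi * \<i>))"

definition period_group :: "complex \<Rightarrow> real \<Rightarrow> real \<Rightarrow> (complex \<Rightarrow> complex) \<Rightarrow> complex set \<Rightarrow> complex
      \<Rightarrow> (complex \<Rightarrow> complex) \<Rightarrow> complex set \<Rightarrow> complex \<Rightarrow> (complex \<times> complex) set" where
  "period_group \<tau> r1 r2 g S p0 t K s =
     {ct. \<forall>c. dprime \<tau> r1 r2 g S p0 t K s (fst c + fst ct, snd c + snd ct)
             = dprime \<tau> r1 r2 g S p0 t K s c}"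

end

theory Submission
  imports Defs
begin

lemma ee_add: "ee (x + y) = ee x * ee y"
  unfolding ee_def by (simp add: distrib_left exp_add)

lemma ee_nonzero: "ee x \<noteq> 0"
  unfolding ee_def by simp

lemma ee_minus: "ee (- x) = inverse (ee x)"
  unfolding ee_def by (simp add: exp_minus)

lemma ee_int: "n \<in> \<int> \<Longrightarrow> ee n = 1"
proof -
  assume "n \<in> \<int>"
  then obtain k where k: "n = of_int k" by (auto elim: Ints_cases)
  have "exp (2 * of_real pi * \<i> * n) = exp 0"
    unfolding exp_eq k by (rule exI[of _ k]) (simp add: algebra_simps)
  then show ?thesis unfolding ee_def by simp
qed

lemma ee_eq_1: "ee x = 1 \<Longrightarrow> x \<in> \<int>"
proof -
  assume "ee x = 1"
  then have "exp (2 * of_real pi * \<i> * x) = exp 0" unfolding ee_def by simp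
  then obtain n :: int where "2 * of_real pi * \<i> * x = 0 + (of_int (2 * n) * pi) * \<i>"
    unfolding exp_eq by blast
  then have "x = of_int n" by (simp add: field_simps)
  then show ?thesis by simp
qed

lemma ee_deriv: "(ee has_field_derivative (2 * of_real pi * \<i> * ee x)) (at x)"
  unfolding ee_def by (auto intro!: derivative_eq_intros)

lemma norm_ee: "norm (ee x) = exp (- 2 * pi * Im x)"
  unfolding ee_def by simp

lemma theta_plus1: "theta_char \<tau> a b (w + 1) = ee a * theta_char \<tau> a b w"
proof -
  have "ee ((1/2) * (of_int n + a)^2 * \<tau> + (of_int n + a) * ((w + 1) + b)) =
        ee a * ee ((1/2) * (of_int n + a)^2 * \<tau> + (of_int n + a) * (w + b))" for n :: int
  proof -
    have "(1/2) * (of_int n + a)^2 * \<tau> + (of_int n + a) * ((w + 1) + b) =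
          of_int n + (a + ((1/2) * (of_int n + a)^2 * \<tau> + (of_int n + a) * (w + b)))"
      by (simp add: algebra_simps)
    then show ?thesis by (simp add: ee_add ee_int)
  qed
  then show ?thesis unfolding theta_char_def by (simp add: infsum_cmult_right')
qed

lemma theta_plus_tau: "theta_char \<tau> a b (w + \<tau>) = ee (- \<tau>/2 - w - b) * theta_char \<tau> a b w"
proof -
  have "ee ((1/2) * (of_int n + a)^2 * \<tau> + (of_int n + a) * ((w + \<tau>) + b)) =
        ee (- \<tau>/2 - w - b) * ee ((1/2) * (of_int (n+1) + a)^2 * \<tau> + (of_int (n+1) + a) * (w + b))" for n :: int
  proof -
    have "(1/2) * (of_int n + a)^2 * \<tau> + (of_int n + a) * ((w + \<tau>) + b) =
          (- \<tau>/2 - w - b) + ((1/2) * (of_int (n+1) + a)^2 * \<tau> + (of_int (n+1) + a) * (w + b))"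
      by (simp add: algebra_simps power2_eq_square)
    then show ?thesis by (simp only: ee_add)
  qed
  then have "theta_char \<tau> a b (w + \<tau>) = ee (- \<tau>/2 - w - b) *
      infsum (\<lambda>n::int. ee ((1/2) * (of_int (n+1) + a)^2 * \<tau> + (of_int (n+1) + a) * (w + b))) UNIV"
    unfolding theta_char_def by (simp add: infsum_cmult_right')
  also have "infsum (\<lambda>n::int. ee ((1/2) * (of_int (n+1) + a)^2 * \<tau> + (of_int (n+1) + a) * (w + b))) UNIV
      = theta_char \<tau> a b w"
  proof -
    have bij: "bij_betw (\<lambda>n::int. n + 1) UNIV UNIV"
      by (auto simp: bij_betw_def inj_on_def image_def intro: exI[of _ "_ - 1"])
    show ?thesis unfolding theta_char_def
      using infsum_reindex_bij_betw[OF bij, of "\<lambda>n::int. ee ((1/2) * (of_int n + a)^2 * \<tau> + (of_int n + a) * (w + b))"]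
      by simp
  qed
  finally show ?thesis .
qed

lemma theta_shift: "theta_char \<tau> a b w = ee (a^2 * \<tau> / 2 + a * (w + b)) * theta_char \<tau> 0 0 (w + a * \<tau> + b)"
proof -
  have "ee ((1/2) * (of_int n + a)^2 * \<tau> + (of_int n + a) * (w + b)) =
        ee (a^2 * \<tau> / 2 + a * (w + b)) * ee ((1/2) * (of_int n + 0)^2 * \<tau> + (of_int n + 0) * ((w + a * \<tau> + b) + 0))" for n :: int
  proof -
    have "(1/2) * (of_int n + a)^2 * \<tau> + (of_int n + a) * (w + b) =
          (a^2 * \<tau> / 2 + a * (w + b)) + ((1/2) * (of_int n + 0)^2 * \<tau> + (of_int n + 0) * ((w + a * \<tau> + b) + 0))"
      by (simp add: algebra_simps power2_eq_square)
    then show ?thesis by (simp only: ee_add)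
  qed
  then show ?thesis unfolding theta_char_def by (simp add: infsum_cmult_right')
qed

definition Pser :: "complex \<Rightarrow> complex \<Rightarrow> complex" where
  "Pser \<tau> z = (\<Sum>k. ee ((1/2) * (of_nat k)^2 * \<tau>) * z^k)"

lemma Pser_summable_norm:
  assumes "Im \<tau> > 0"
  shows "summable (\<lambda>k. norm (ee ((1/2) * (of_nat k)^2 * \<tau>) * z^k))"
proof -
  define T where "T = Im \<tau>"
  define R where "R = norm z"
  have T: "T > 0" using assms T_def by simp
  have e1: "exp (- pi * T) < 1" using T by simp
  have "(\<lambda>k. exp (- pi * T) ^ k) \<longlonglongrightarrow> 0"
    using e1 by (intro LIMSEQ_power_zero) simp
  then have "(\<lambda>k. exp (- pi * T) ^ k * R) \<longlonglongrightarrow> 0 * R"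
    by (rule tendsto_mult[OF _ tendsto_const])
  then have "eventually (\<lambda>k. exp (- pi * T) ^ k * R < 1/2) sequentially"
    by (intro order_tendstoD) auto
  then obtain N where N: "\<And>k. k \<ge> N \<Longrightarrow> exp (- pi * T) ^ k * R < 1/2"
    by (auto simp: eventually_sequentially)
  have nrm: "norm (ee ((1/2) * (of_nat k)^2 * \<tau>) * z^k) = (exp (- pi * T) ^ k * R) ^ k" for k
  proof -
    have "norm (ee ((1/2) * (of_nat k)^2 * \<tau>)) = exp (- pi * T * real k * real k)"
      by (simp add: norm_ee T_def power2_eq_square algebra_simps)
    also have "\<dots> = (exp (- pi * T) ^ k) ^ k"
      by (simp add: exp_of_nat_mult[symmetric] power_mult[symmetric] algebra_simps)
    finally show ?thesis by (simp add: norm_mult norm_power R_def power_mult_distrib)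
  qed
  show ?thesis
  proof (rule summable_comparison_test')
    show "summable (\<lambda>k. (1/2::real) ^ k)" by (rule summable_geometric) simp
    fix k assume "k \<ge> N"
    then have "exp (- pi * T) ^ k * R < 1/2" by (rule N)
    moreover have "0 \<le> exp (- pi * T) ^ k * R" by (simp add: R_def)
    ultimately have "(exp (- pi * T) ^ k * R) ^ k \<le> (1/2) ^ k"
      by (intro power_mono) auto
    then show "norm (norm (ee ((1/2) * (of_nat k)^2 * \<tau>) * z^k)) \<le> (1/2) ^ k"
      using abs_of_nonneg[OF zero_le_power[OF \<open>0 \<le> exp (- pi * T) ^ k * R\<close>, of k]]
      by (simp only: real_norm_def nrm)
  qed
qed

lemma Pser_summable:
  assumes "Im \<tau> > 0"
  shows "summable (\<lambda>k. ee ((1/2) * (of_nat k)^2 * \<tau>) * z^k)"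
  by (rule summable_norm_cancel[OF Pser_summable_norm[OF assms]])

lemma Pser_deriv:
  assumes "Im \<tau> > 0"
  shows "(Pser \<tau> has_field_derivative (\<Sum>n. diffs (\<lambda>k. ee ((1/2) * (of_nat k)^2 * \<tau>)) n * z^n)) (at z)"
  unfolding Pser_def[abs_def] by (rule termdiffs_strong_converges_everywhere[OF Pser_summable[OF assms]])

lemma Pser_holo:
  assumes "Im \<tau> > 0"
  shows "Pser \<tau> holomorphic_on UNIV"
  unfolding holomorphic_on_open[OF open_UNIV] using Pser_deriv[OF assms] by blast

lemma Pser_0: "Pser \<tau> 0 = 1"
  unfolding Pser_def using powser_zero[of "\<lambda>k. ee ((1/2) * (of_nat k)^2 * \<tau>)"]
  by (simp add: ee_def)

lemma ee_of_nat_mult: "ee (of_nat k * w) = ee w ^ k"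
  unfolding ee_def using exp_of_nat_mult[of k "2 * of_real pi * \<i> * w"]
  by (simp add: algebra_simps)

lemma Pser_has_sum:
  assumes "Im \<tau> > 0"
  shows "((\<lambda>k. ee ((1/2) * (of_nat k)^2 * \<tau>) * z^k) has_sum Pser \<tau> z) UNIV"
  unfolding Pser_def
  by (rule norm_summable_imp_has_sum[OF Pser_summable_norm[OF assms] summable_sums[OF Pser_summable[OF assms]]])

lemma theta00_Pser:
  assumes tau: "Im \<tau> > 0"
  shows "theta_char \<tau> 0 0 w = Pser \<tau> (ee w) + Pser \<tau> (ee (- w)) - 1"
proof -
  define tm where "tm = (\<lambda>n::int. ee ((1/2) * (of_int n + 0)^2 * \<tau> + (of_int n + 0) * (w + 0)))"
  define c where "c = (\<lambda>k::nat. ee ((1/2) * (of_nat k)^2 * \<tau>))"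
  have tm1: "tm (int k) = c k * ee w ^ k" for k
  proof -
    have "tm (int k) = ee ((1/2) * (of_nat k)^2 * \<tau> + of_nat k * w)"
      unfolding tm_def by simp
    also have "\<dots> = c k * ee w ^ k" unfolding c_def by (simp only: ee_add ee_of_nat_mult)
    finally show ?thesis .
  qed
  have tm2: "tm (- int k) = c k * ee (- w) ^ k" for k
  proof -
    have "tm (- int k) = ee ((1/2) * (of_nat k)^2 * \<tau> + of_nat k * (- w))"
      unfolding tm_def by (simp add: power2_eq_square)
    also have "\<dots> = c k * ee (- w) ^ k" unfolding c_def by (simp only: ee_add ee_of_nat_mult)
    finally show ?thesis .
  qed
  have h1: "(tm has_sum Pser \<tau> (ee w)) (range int)"
  proof -
    have "((tm \<circ> int) has_sum Pser \<tau> (ee w)) UNIV"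
      using Pser_has_sum[OF tau, of "ee w"] by (simp add: o_def tm1 c_def)
    then show ?thesis using has_sum_reindex[of int UNIV tm] by simp
  qed
  have h2: "(tm has_sum (Pser \<tau> (ee (- w)) - 1)) (range (\<lambda>k. - int (Suc k)))"
  proof -
    define f where "f = (\<lambda>k. c k * ee (- w) ^ k)"
    have f0: "f 0 = 1" unfolding f_def c_def by (simp add: ee_def)
    have "f sums Pser \<tau> (ee (- w))"
      unfolding f_def c_def Pser_def by (rule summable_sums[OF Pser_summable[OF tau]])
    then have s: "(\<lambda>k. f (Suc k)) sums (Pser \<tau> (ee (- w)) - 1)"
      using sums_Suc_iff[of f "Pser \<tau> (ee (- w)) - 1"] f0 by simp
    have ns0: "summable (\<lambda>k. norm (f k))"
      unfolding f_def c_def by (rule Pser_summable_norm[OF tau])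
    have ns: "summable (\<lambda>k. norm (f (Suc k)))"
      using ns0 summable_Suc_iff[of "\<lambda>k. norm (f k)"] by simp
    have "((\<lambda>k. f (Suc k)) has_sum (Pser \<tau> (ee (- w)) - 1)) UNIV"
      by (rule norm_summable_imp_has_sum[OF ns s])
    moreover have "(tm \<circ> (\<lambda>k. - int (Suc k))) = (\<lambda>k. f (Suc k))"
      by (rule ext) (simp add: f_def tm2[of "Suc _", simplified])
    moreover have "inj (\<lambda>k. - int (Suc k))" by (auto simp: inj_on_def)
    ultimately show ?thesis using has_sum_reindex[of "\<lambda>k. - int (Suc k)" UNIV tm] by simp
  qed
  have disj: "range int \<inter> range (\<lambda>k. - int (Suc k)) = {}" by auto
  have un: "range int \<union> range (\<lambda>k. - int (Suc k)) = UNIV"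
  proof (rule set_eqI, rule iffI)
    fix n :: int
    show "n \<in> range int \<union> range (\<lambda>k. - int (Suc k))"
    proof (cases "n \<ge> 0")
      case True then have "n = int (nat n)" by simp
      then show ?thesis by blast
    next
      case False then have "n = - int (Suc (nat (- n - 1)))" by simp
      then show ?thesis by blast
    qed
  qed simp
  have "(tm has_sum (Pser \<tau> (ee w) + (Pser \<tau> (ee (- w)) - 1))) UNIV"
    using has_sum_Un_disjoint[OF h1 h2 disj] un by simp
  then show ?thesis unfolding theta_char_def tm_def[symmetric]
    by (simp add: infsumI)
qed

lemma theta00_holo:
  assumes tau: "Im \<tau> > 0"
  shows "theta_char \<tau> 0 0 holomorphic_on UNIV"
proof -
  have "(\<lambda>w. Pser \<tau> (ee w) + Pser \<tau> (ee (- w)) - 1) holomorphic_on UNIV"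
    unfolding ee_def
    by (intro holomorphic_intros holomorphic_on_compose_gen[OF _ Pser_holo[OF tau], unfolded o_def]) auto
  moreover have "theta_char \<tau> 0 0 = (\<lambda>w. Pser \<tau> (ee w) + Pser \<tau> (ee (- w)) - 1)"
    using theta00_Pser[OF tau] by auto
  ultimately show ?thesis by simp
qed

lemma theta00_nonzero:
  assumes tau: "Im \<tau> > 0"
  shows "\<exists>w. theta_char \<tau> 0 0 w \<noteq> 0"
proof (rule ccontr)
  assume "\<not> ?thesis"
  then have z: "\<And>w. theta_char \<tau> 0 0 w = 0" by auto
  have eq: "Pser \<tau> z = 1 - Pser \<tau> (inverse z)" if "z \<noteq> 0" for z
  proof -
    define w where "w = Ln z / (2 * of_real pi * \<i>)"
    have "ee w = z" unfolding w_def ee_def using that by simp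
    moreover then have "ee (- w) = inverse z" by (simp add: ee_minus)
    ultimately show ?thesis using z[of w] theta00_Pser[OF tau, of w] by (simp add: eq_diff_eq)
  qed
  have cont: "isCont (Pser \<tau>) 0"
    using Pser_holo[OF tau] holomorphic_on_imp_continuous_on continuous_on_eq_continuous_at
    by blast
  have "((\<lambda>z. Pser \<tau> (inverse z)) \<longlongrightarrow> Pser \<tau> 0) at_infinity"
    by (rule isCont_tendsto_compose[OF cont tendsto_inverse_0])
  then have "((\<lambda>z. 1 - Pser \<tau> (inverse z)) \<longlongrightarrow> 0) at_infinity"
    using Pser_0[of \<tau>] by (auto intro!: tendsto_eq_intros)
  moreover have "eventually (\<lambda>z. 1 - Pser \<tau> (inverse z) = Pser \<tau> z) at_infinity"
    unfolding eventually_at_infinity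
  proof (rule exI[of _ 1], intro allI impI)
    fix x :: complex assume "1 \<le> norm x"
    then have "x \<noteq> 0" by auto
    then show "1 - Pser \<tau> (inverse x) = Pser \<tau> x" using eq[of x] by simp
  qed
  ultimately have "(Pser \<tau> \<longlongrightarrow> 0) at_infinity"
    by (rule Lim_transform_eventually)
  then have "Pser \<tau> 0 = 0" by (rule Liouville_weak_0[OF Pser_holo[OF tau]])
  then show False using Pser_0[of \<tau>] by simp
qed

lemma theta_holo:
  assumes tau: "Im \<tau> > 0"
  shows "theta_char \<tau> a b holomorphic_on UNIV"
proof -
  have "(\<lambda>w. ee (a^2 * \<tau> / 2 + a * (w + b)) * theta_char \<tau> 0 0 (w + a * \<tau> + b)) holomorphic_on UNIV"
    unfolding ee_def
    by (intro holomorphic_intros holomorphic_on_compose_gen[OF _ theta00_holo[OF tau], unfolded o_def]) auto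
  moreover have "theta_char \<tau> a b = (\<lambda>w. ee (a^2 * \<tau> / 2 + a * (w + b)) * theta_char \<tau> 0 0 (w + a * \<tau> + b))"
    using theta_shift by blast
  ultimately show ?thesis by simp
qed

lemma theta_nonzero:
  assumes tau: "Im \<tau> > 0"
  shows "\<exists>w. theta_char \<tau> a b w \<noteq> 0"
proof -
  obtain w0 where w0: "theta_char \<tau> 0 0 w0 \<noteq> 0" using theta00_nonzero[OF tau] by blast
  have "theta_char \<tau> a b (w0 - a * \<tau> - b) \<noteq> 0"
    using theta_shift[of \<tau> a b "w0 - a * \<tau> - b"] w0 ee_nonzero by simp
  then show ?thesis by blast
qed

lemma entire_deriv:
  assumes "F holomorphic_on UNIV"
  shows "(F has_field_derivative deriv F w) (at w)"
  using holomorphic_derivI[OF assms open_UNIV, of w UNIV] by simp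

lemma ode_prop:
  fixes F H :: "complex \<Rightarrow> complex"
  assumes hF: "F holomorphic_on UNIV" and hH: "H holomorphic_on UNIV"
    and W: "\<And>w. deriv F w * H w - F w * deriv H w = 0"
    and H0: "H w0 \<noteq> 0"
  shows "\<exists>C. \<forall>w. F w = C * H w"
proof -
  have "continuous (at w0) H"
    using hH holomorphic_on_imp_continuous_on continuous_on_eq_continuous_at open_UNIV by blast
  then obtain r where r: "r > 0" "\<And>y. dist w0 y < r \<Longrightarrow> H y \<noteq> 0"
    using continuous_at_avoid[of w0 H 0] H0 by blast
  have "\<exists>c. \<forall>x\<in>ball w0 r. F x / H x = c"
  proof (rule has_field_derivative_zero_constant)
    fix x assume x: "x \<in> ball w0 r"
    then have Hx: "H x \<noteq> 0" using r by (simp add: dist_commute)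
    have "((\<lambda>x. F x / H x) has_field_derivative (deriv F x * H x - F x * deriv H x) / (H x * H x)) (at x)"
      by (rule DERIV_divide[OF entire_deriv[OF hF] entire_deriv[OF hH] Hx])
    then show "((\<lambda>x. F x / H x) has_field_derivative 0) (at x within ball w0 r)"
      using W[of x] by (simp add: has_field_derivative_at_within)
  qed simp
  then obtain c where c: "\<And>x. x \<in> ball w0 r \<Longrightarrow> F x / H x = c" by blast
  have eq: "F x = c * H x" if "x \<in> ball w0 r" for x
  proof -
    have "H x \<noteq> 0" using r that by (simp add: dist_commute)
    then show ?thesis using c[OF that] by (simp add: field_simps)
  qed
  have "F w = c * H w" for w
    by (rule analytic_continuation_open[of "ball w0 r" UNIV F "\<lambda>w. c * H w"])
       (use r eq hF hH in \<open>auto intro: holomorphic_intros\<close>)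
  then show ?thesis by blast
qed

lemma theta_both_nonzero:
  assumes tau: "Im \<tau> > 0"
  shows "\<exists>w. theta_char \<tau> 0 0 w \<noteq> 0 \<and> theta_char \<tau> a b w \<noteq> 0"
proof (rule ccontr)
  assume "\<not> ?thesis"
  then have Z: "\<And>w. theta_char \<tau> 0 0 w \<noteq> 0 \<Longrightarrow> theta_char \<tau> a b w = 0" by blast
  obtain w1 where w1: "theta_char \<tau> 0 0 w1 \<noteq> 0" using theta00_nonzero[OF tau] by blast
  have "continuous (at w1) (theta_char \<tau> 0 0)"
    using theta00_holo[OF tau] holomorphic_on_imp_continuous_on continuous_on_eq_continuous_at open_UNIV by blast
  then obtain r where r: "r > 0" "\<And>y. dist w1 y < r \<Longrightarrow> theta_char \<tau> 0 0 y \<noteq> 0"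
    using continuous_at_avoid[of w1 "theta_char \<tau> 0 0" 0] w1 by blast
  have "theta_char \<tau> a b w = (\<lambda>_. 0) w" for w
    by (rule analytic_continuation_open[of "ball w1 r" UNIV])
       (use r Z theta_holo[OF tau] in \<open>auto intro: holomorphic_intros\<close>)
  then show False using theta_nonzero[OF tau, of a b] by simp
qed

lemma wronskian_nonzero:
  fixes ra rb :: real
  assumes tau: "Im \<tau> > 0" and G: "G \<noteq> 0"
  defines "f \<equiv> theta_char \<tau> 0 0" and "h \<equiv> theta_char \<tau> (of_real ra) (of_real rb)"
  shows "\<exists>w. deriv f w * h w - f w * deriv h w - G * f w * h w \<noteq> 0"
proof (rule ccontr)
  assume "\<not> ?thesis"
  then have Z: "\<And>w. deriv f w * h w - f w * deriv h w - G * f w * h w = 0" by auto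
  have hf: "f holomorphic_on UNIV" unfolding f_def by (rule theta00_holo[OF tau])
  have hh: "h holomorphic_on UNIV" unfolding h_def by (rule theta_holo[OF tau])
  define F where "F = (\<lambda>w. f w * exp (- G * w))"
  have hF: "F holomorphic_on UNIV" unfolding F_def by (intro holomorphic_intros hf)
  have dF: "(F has_field_derivative (deriv f w * exp (- G * w) - G * f w * exp (- G * w))) (at w)" for w
    unfolding F_def
    by (rule derivative_eq_intros entire_deriv[OF hf] refl | simp)+
  have WF: "deriv F w * h w - F w * deriv h w = 0" for w
  proof -
    have dFw: "deriv F w = deriv f w * exp (- G * w) - G * f w * exp (- G * w)"
      by (rule DERIV_imp_deriv[OF dF])
    have "deriv F w * h w - F w * deriv h w =
        exp (- G * w) * (deriv f w * h w - f w * deriv h w - G * f w * h w)"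
      unfolding dFw by (simp add: F_def algebra_simps)
    then show ?thesis using Z[of w] by simp
  qed
  obtain w0 where w0: "h w0 \<noteq> 0" unfolding h_def using theta_nonzero[OF tau] by blast
  obtain C where C: "\<And>w. F w = C * h w" using ode_prop[OF hF hh WF w0] by blast
  obtain w1 where w1: "f w1 \<noteq> 0" unfolding f_def using theta00_nonzero[OF tau] by blast
  have Fw1: "F w1 \<noteq> 0" unfolding F_def using w1 by simp
  have "F (w1 + 1) = exp (- G) * F w1"
    unfolding F_def f_def using theta_plus1[of \<tau> 0 0 w1]
    by (simp add: ee_def algebra_simps exp_add[symmetric])
  moreover have "F (w1 + 1) = ee (of_real ra) * F w1"
    using C[of "w1 + 1"] C[of w1] theta_plus1[of \<tau> "of_real ra" "of_real rb" w1]
    unfolding h_def by simp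
  ultimately have "exp (- G) = ee (of_real ra)" using Fw1 by simp
  then have "exp (- G) = exp (2 * of_real pi * \<i> * of_real ra)" unfolding ee_def .
  then obtain n :: int where n: "- G = 2 * of_real pi * \<i> * of_real ra + of_int (2 * n) * pi * \<i>"
    unfolding exp_eq by blast
  have "F (w1 + \<tau>) = ee (- \<tau>/2 - w1) * exp (- G * \<tau>) * F w1"
    unfolding F_def f_def using theta_plus_tau[of \<tau> 0 0 w1]
    by (simp add: algebra_simps exp_add[symmetric])
  moreover have "F (w1 + \<tau>) = ee (- \<tau>/2 - w1) * ee (- of_real rb) * F w1"
    using C[of "w1 + \<tau>"] C[of w1] theta_plus_tau[of \<tau> "of_real ra" "of_real rb" w1]
    unfolding h_def by (simp add: ee_add[symmetric])
  ultimately have "exp (- G * \<tau>) = ee (- of_real rb)" using Fw1 ee_nonzero[of "- \<tau>/2 - w1"] by simp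
  then have "exp (- G * \<tau>) = exp (2 * of_real pi * \<i> * (- of_real rb))" unfolding ee_def .
  then obtain m :: int where m: "- G * \<tau> = 2 * of_real pi * \<i> * (- of_real rb) + of_int (2 * m) * pi * \<i>"
    unfolding exp_eq by blast
  have "- G = 2 * of_real pi * \<i> * (of_real ra + of_int n)" using n by (simp add: algebra_simps)
  then have "2 * of_real pi * \<i> * (of_real ra + of_int n) * \<tau> = 2 * of_real pi * \<i> * (of_int m - of_real rb)"
    using m by (simp add: algebra_simps)
  then have "(of_real ra + of_int n) * \<tau> = of_int m - of_real rb" by simp
  then have "Im ((of_real ra + of_int n) * \<tau>) = Im (of_int m - of_real rb)" by (rule arg_cong)
  then have "(ra + n) * Im \<tau> = 0" by simp
  then have "ra + n = 0" using tau by simp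
  then have "(of_real ra + of_int n :: complex) = 0" by (metis of_real_0 of_real_add of_real_of_int_eq)
  then have "G = 0" using \<open>- G = _ * (of_real ra + of_int n)\<close> by simp
  then show False using G by simp
qed

lemma closed_integral_int:
  fixes g :: "complex \<Rightarrow> complex"
  assumes D: "open D" "connected D" "simply_connected D"
    and pd: "p1 \<noteq> p2"
    and gh: "g holomorphic_on (D - {p1, p2})"
    and r1: "residue g p1 = 1 / (2 * of_real pi * \<i>)"
    and r2: "residue g p2 = - 1 / (2 * of_real pi * \<i>)"
    and \<gamma>: "valid_path \<gamma>" "pathfinish \<gamma> = pathstart \<gamma>" "path_image \<gamma> \<subseteq> D - {p1, p2}"
  shows "contour_integral \<gamma> g \<in> \<int>"
proof -
  have wz: "\<forall>z. z \<notin> D \<longrightarrow> winding_number \<gamma> z = 0"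
    using simply_connected_imp_winding_number_zero[OF D(3) valid_path_imp_path[OF \<gamma>(1)] _ \<gamma>(2)] \<gamma>(3)
    by blast
  have "contour_integral \<gamma> g = 2 * pi * \<i> * (\<Sum>p\<in>{p1,p2}. winding_number \<gamma> p * residue g p)"
    by (rule Residue_theorem[OF D(1,2) _ gh \<gamma> wz]) auto
  also have "\<dots> = 2 * pi * \<i> * (winding_number \<gamma> p1 * residue g p1 + winding_number \<gamma> p2 * residue g p2)"
    using pd by simp
  also have "\<dots> = winding_number \<gamma> p1 - winding_number \<gamma> p2"
    unfolding r1 r2 by (simp add: field_simps)
  finally have eq: "contour_integral \<gamma> g = winding_number \<gamma> p1 - winding_number \<gamma> p2" .
  have "winding_number \<gamma> p1 \<in> \<int>" "winding_number \<gamma> p2 \<in> \<int>"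
    using integer_winding_number[OF valid_path_imp_path[OF \<gamma>(1)] \<gamma>(2)] \<gamma>(3) by auto
  then show ?thesis unfolding eq by auto
qed

lemma phi2_spec:
  fixes g :: "complex \<Rightarrow> complex"
  assumes S: "open S" "connected S" and gh: "g holomorphic_on S"
    and p0: "p0 \<in> S" and z: "z \<in> S"
  shows "\<exists>\<gamma>. valid_path \<gamma> \<and> pathstart \<gamma> = p0 \<and> pathfinish \<gamma> = z \<and>
            path_image \<gamma> \<subseteq> S \<and> (g has_contour_integral phi2 g S p0 z) \<gamma>"
proof -
  obtain \<gamma> where \<gamma>: "polynomial_function \<gamma>" "path_image \<gamma> \<subseteq> S" "pathstart \<gamma> = p0" "pathfinish \<gamma> = z"
    using connected_open_polynomial_connected[OF S p0 z] by blast
  have v: "valid_path \<gamma>" by (rule valid_path_polynomial_function[OF \<gamma>(1)])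
  have "(g has_contour_integral contour_integral \<gamma> g) \<gamma>"
    by (rule has_contour_integral_integral[OF contour_integrable_holomorphic_simple[OF gh S(1) v \<gamma>(2)]])
  then have ex: "\<exists>v \<gamma>. valid_path \<gamma> \<and> pathstart \<gamma> = p0 \<and> pathfinish \<gamma> = z \<and>
            path_image \<gamma> \<subseteq> S \<and> (g has_contour_integral v) \<gamma>"
    using v \<gamma> by blast
  show ?thesis unfolding phi2_def by (rule someI_ex[OF ex])
qed

lemma psi_deriv:
  fixes g :: "complex \<Rightarrow> complex"
  assumes D: "open D" "connected D" "simply_connected D"
    and pd: "p1 \<noteq> p2"
    and gh: "g holomorphic_on (D - {p1, p2})"
    and r1: "residue g p1 = 1 / (2 * of_real pi * \<i>)"
    and r2: "residue g p2 = - 1 / (2 * of_real pi * \<i>)"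
    and p0: "p0 \<in> D - {p1, p2}" and z: "z \<in> D - {p1, p2}"
  shows "((\<lambda>z. ee (phi2 g (D - {p1, p2}) p0 z)) has_field_derivative
            (2 * of_real pi * \<i> * g z * ee (phi2 g (D - {p1, p2}) p0 z))) (at z)"
proof -
  define S where "S = D - {p1, p2}"
  have oS: "open S" unfolding S_def using D(1) by auto
  have cS: "connected S" unfolding S_def
    by (rule connected_open_delete_finite[OF D(1,2)]) auto
  have gS: "g holomorphic_on S" using gh S_def by simp
  have zS: "z \<in> S" using z S_def by simp
  have p0S: "p0 \<in> S" using p0 S_def by simp
  obtain r where r: "r > 0" "ball z r \<subseteq> S" using oS zS openE by blast
  obtain \<Phi> where \<Phi>: "\<And>x. x \<in> ball z r \<Longrightarrow> (\<Phi> has_field_derivative g x) (at x within ball z r)"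
    using holomorphic_convex_primitive'[of "ball z r" g] gS r by (auto intro: holomorphic_on_subset)
  have \<Phi>': "(\<Phi> has_field_derivative g x) (at x)" if "x \<in> ball z r" for x
    using \<Phi>[OF that] at_within_open[OF that open_ball] by simp
  obtain \<gamma>1 where \<gamma>1: "valid_path \<gamma>1" "pathstart \<gamma>1 = p0" "pathfinish \<gamma>1 = z" "path_image \<gamma>1 \<subseteq> S"
     "(g has_contour_integral phi2 g S p0 z) \<gamma>1"
    using phi2_spec[OF oS cS gS p0S zS] by blast
  have loc: "ee (phi2 g S p0 w) = ee (phi2 g S p0 z) * ee (\<Phi> w - \<Phi> z)" if w: "w \<in> ball z r" for w
  proof -
    have wS: "w \<in> S" using w r by auto
    obtain \<gamma>2 where \<gamma>2: "valid_path \<gamma>2" "pathstart \<gamma>2 = p0" "pathfinish \<gamma>2 = w" "path_image \<gamma>2 \<subseteq> S"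
       "(g has_contour_integral phi2 g S p0 w) \<gamma>2"
      using phi2_spec[OF oS cS gS p0S wS] by blast
    have segsub: "closed_segment z w \<subseteq> ball z r"
      using w r(1) by (intro convex_contains_segment[THEN iffD1, rule_format]) auto
    have lp: "(g has_contour_integral (\<Phi> w - \<Phi> z)) (linepath z w)"
      using contour_integral_primitive[OF \<Phi> valid_path_linepath, of z w] segsub by simp
    define \<gamma> where "\<gamma> = \<gamma>1 +++ (linepath z w +++ reversepath \<gamma>2)"
    have v\<gamma>: "valid_path \<gamma>" unfolding \<gamma>_def using \<gamma>1 \<gamma>2
      by (intro valid_path_join) auto
    have int: "(g has_contour_integral (phi2 g S p0 z + ((\<Phi> w - \<Phi> z) + - phi2 g S p0 w))) \<gamma>"
      unfolding \<gamma>_def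
      by (intro has_contour_integral_join \<gamma>1 lp has_contour_integral_reversepath \<gamma>2 valid_path_join)
         (use \<gamma>1 \<gamma>2 in auto)
    have cl: "pathfinish \<gamma> = pathstart \<gamma>" unfolding \<gamma>_def using \<gamma>1 \<gamma>2 by simp
    have img: "path_image \<gamma> \<subseteq> D - {p1, p2}"
      unfolding \<gamma>_def using \<gamma>1 \<gamma>2 segsub r(2) S_def
      by (auto simp: path_image_join)
    have "contour_integral \<gamma> g \<in> \<int>"
      by (rule closed_integral_int[OF D pd gh r1 r2 v\<gamma> cl img])
    then have "phi2 g S p0 z + ((\<Phi> w - \<Phi> z) + - phi2 g S p0 w) \<in> \<int>"
      using contour_integral_unique[OF int] by simp
    then have "ee (phi2 g S p0 z + ((\<Phi> w - \<Phi> z) + - phi2 g S p0 w)) = 1" by (rule ee_int)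
    then have "ee (phi2 g S p0 z) * ee (\<Phi> w - \<Phi> z) * ee (- phi2 g S p0 w) = 1"
      by (simp only: ee_add mult.assoc)
    then show ?thesis by (simp add: ee_minus field_simps ee_nonzero)
  qed
  have D0: "((\<lambda>w. ee (phi2 g S p0 z) * ee (\<Phi> w - \<Phi> z)) has_field_derivative
           ee (phi2 g S p0 z) * (2 * of_real pi * \<i> * ee (\<Phi> z - \<Phi> z) * (g z - 0))) (at z)"
    by (intro DERIV_cmult DERIV_chain2[OF ee_deriv] DERIV_diff \<Phi>' DERIV_const) (use r in auto)
  have eq: "ee (phi2 g S p0 z) * (2 * of_real pi * \<i> * ee (\<Phi> z - \<Phi> z) * (g z - 0))
      = 2 * of_real pi * \<i> * g z * ee (phi2 g S p0 z)"
    by (simp add: ee_def)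
  have "((\<lambda>w. ee (phi2 g S p0 z) * ee (\<Phi> w - \<Phi> z)) has_field_derivative
           (2 * of_real pi * \<i> * g z * ee (phi2 g S p0 z))) (at z)"
    using D0 unfolding eq .
  then have "((\<lambda>w. ee (phi2 g S p0 w)) has_field_derivative
           (2 * of_real pi * \<i> * g z * ee (phi2 g S p0 z))) (at z)"
  proof (rule has_field_derivative_transform_within_open[OF _ open_ball])
    show "z \<in> ball z r" using r by simp
    fix x assume "x \<in> ball z r"
    then show "ee (phi2 g S p0 z) * ee (\<Phi> x - \<Phi> z) = ee (phi2 g S p0 x)" by (rule loc[symmetric])
  qed
  then show ?thesis unfolding S_def .
qed

lemma mobius_case:
  fixes T :: "complex \<Rightarrow> complex \<Rightarrow> complex"
  assumes Om: "open Om" "s \<in> Om"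
    and TA: "\<And>u y. u \<noteq> 0 \<Longrightarrow> y \<in> Om \<Longrightarrow> T u y = A y + u * B y"
    and dA: "(A has_field_derivative A') (at s)" and dB: "(B has_field_derivative B') (at s)"
    and W: "A' * B s - A s * B' \<noteq> 0" and e: "e \<noteq> 1" "e \<noteq> 0"
  shows "\<exists>u. u \<noteq> 0 \<and> deriv (T u) s / T u s + 1 / s \<noteq> deriv (T (u * e)) s / T (u * e) s + 1 / s"
proof -
  have dT: "deriv (T u) s = A' + u * B'" if u0: "u \<noteq> 0" for u
  proof -
    have "((\<lambda>y. A y + u * B y) has_field_derivative A' + u * B') (at s)"
      by (rule DERIV_add[OF dA DERIV_cmult[OF dB]])
    then have "(T u has_field_derivative A' + u * B') (at s)"
      by (rule has_field_derivative_transform_within_open[OF _ Om]) (simp add: TA u0)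
    then show ?thesis by (rule DERIV_imp_deriv)
  qed
  have Ts: "T u s = A s + u * B s" if "u \<noteq> 0" for u using TA Om that by simp
  obtain u where u: "u \<noteq> 0" "A s + u * B s \<noteq> 0" "A s + u * e * B s \<noteq> 0"
  proof (cases "B s = 0")
    case True
    then have "A s \<noteq> 0" using W by auto
    then show ?thesis using that[of 1] True by simp
  next
    case False
    obtain u where "u \<notin> {0, - A s / B s, - A s / (e * B s)}"
      using ex_new_if_finite[OF infinite_UNIV_char_0, of "{0, - A s / B s, - A s / (e * B s)}"] by auto
    then have "u \<noteq> 0" "A s + u * B s \<noteq> 0" "A s + u * e * B s \<noteq> 0"
      using False e by (auto simp: field_simps) (metis add.commute eq_neg_iff_add_eq_0)+
    then show ?thesis using that by blast
  qed
  have "deriv (T u) s / T u s \<noteq> deriv (T (u * e)) s / T (u * e) s"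
  proof
    assume eq: "deriv (T u) s / T u s = deriv (T (u * e)) s / T (u * e) s"
    then have "(A' + u * B') / (A s + u * B s) = (A' + u * e * B') / (A s + u * e * B s)"
      using u e by (simp add: dT Ts mult.assoc)
    then have "(A' + u * B') * (A s + u * e * B s) = (A' + u * e * B') * (A s + u * B s)"
      using u by (simp add: divide_eq_eq field_simps)
    then have "u * (e - 1) * (A' * B s - A s * B') = 0"
      by (simp add: algebra_simps)
    then show False using u e W by simp
  qed
  then show ?thesis using u by auto
qed

lemma pole_case:
  fixes T A \<beta> :: "complex \<Rightarrow> complex"
  assumes Om: "open Om" "0 \<in> Om" and hA: "A holomorphic_on Om" and hb: "\<beta> holomorphic_on Om"
    and TA: "\<And>y. y \<in> Om \<Longrightarrow> y \<noteq> 0 \<Longrightarrow> T y = A y + u * \<beta> y / y"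
    and u: "u \<noteq> 0" and b0: "\<beta> 0 \<noteq> 0"
  shows "Lim (at 0) (\<lambda>x. deriv T x / T x + 1 / x) = (A 0 + u * deriv \<beta> 0) / (u * \<beta> 0)"
proof -
  define N where "N = (\<lambda>y. y * A y + u * \<beta> y)"
  have hN: "N holomorphic_on Om" unfolding N_def by (intro holomorphic_intros hA hb)
  have dN: "(N has_field_derivative deriv N x) (at x)" if "x \<in> Om" for x
    using holomorphic_derivI[OF hN Om(1) that, of UNIV] by simp
  have N0: "N 0 \<noteq> 0" unfolding N_def using u b0 by simp
  have dN0: "deriv N 0 = A 0 + u * deriv \<beta> 0"
  proof -
    have dA0: "(A has_field_derivative deriv A 0) (at 0)"
      using holomorphic_derivI[OF hA Om(1) Om(2), of UNIV] by simp
    have db0: "(\<beta> has_field_derivative deriv \<beta> 0) (at 0)"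
      using holomorphic_derivI[OF hb Om(1) Om(2), of UNIV] by simp
    have "(N has_field_derivative (1 * A 0 + deriv A 0 * 0 + u * deriv \<beta> 0)) (at 0)"
      unfolding N_def
      using DERIV_add[OF DERIV_mult[OF DERIV_ident dA0] DERIV_cmult[OF db0, of u]] by simp
    then have "deriv N 0 = 1 * A 0 + deriv A 0 * 0 + u * deriv \<beta> 0" by (rule DERIV_imp_deriv)
    then show ?thesis by simp
  qed
  have Fx: "deriv T x / T x + 1 / x = deriv N x / N x" if x: "x \<in> Om" "x \<noteq> 0" "N x \<noteq> 0" for x
  proof -
    have "((\<lambda>y. N y / y) has_field_derivative (deriv N x * x - N x * 1) / (x * x)) (at x)"
      by (intro DERIV_divide dN x DERIV_ident)
    then have "(T has_field_derivative (deriv N x * x - N x * 1) / (x * x)) (at x)"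
    proof (rule has_field_derivative_transform_within_open[of _ _ _ "Om - {0}"])
      show "open (Om - {0})" using Om by auto
      show "x \<in> Om - {0}" using x by auto
      fix y assume "y \<in> Om - {0}"
      then show "N y / y = T y" using TA[of y] by (auto simp: N_def field_simps)
    qed
    then have dT: "deriv T x = (deriv N x * x - N x) / (x * x)" by (simp add: DERIV_imp_deriv)
    have Tx: "T x = N x / x" using TA[OF x(1,2)] x(2) by (simp add: N_def field_simps)
    show ?thesis unfolding dT Tx using x by (simp add: field_simps)
  qed
  have contN: "isCont N 0"
    using holomorphic_on_imp_continuous_on[OF hN] Om continuous_on_eq_continuous_at by blast
  have contdN: "isCont (deriv N) 0"
    using holomorphic_on_imp_continuous_on[OF holomorphic_deriv[OF hN Om(1)]] Om continuous_on_eq_continuous_at by blast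
  have lim1: "((\<lambda>x. deriv N x / N x) \<longlongrightarrow> deriv N 0 / N 0) (at 0)"
    using contN contdN N0 by (intro tendsto_intros) (auto simp: isCont_def)
  have ev: "eventually (\<lambda>x. x \<in> Om \<and> x \<noteq> 0 \<and> N x \<noteq> 0) (at 0)"
  proof -
    have "eventually (\<lambda>x. x \<in> Om) (at 0)" using Om eventually_at_in_open' by blast
    moreover have "eventually (\<lambda>x. N x \<noteq> 0) (at 0)"
      using contN N0 unfolding isCont_def by (rule tendsto_imp_eventually_ne)
    moreover have "eventually (\<lambda>x. x \<noteq> 0) (at (0::complex))" by (rule eventually_neq_at_within)
    ultimately show ?thesis by eventually_elim auto
  qed
  have "((\<lambda>x. deriv T x / T x + 1 / x) \<longlongrightarrow> deriv N 0 / N 0) (at 0)"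
    by (rule Lim_transform_eventually[OF lim1]) (use ev in \<open>eventually_elim, simp add: Fx\<close>)
  then have "Lim (at 0) (\<lambda>x. deriv T x / T x + 1 / x) = deriv N 0 / N 0"
    by (intro tendsto_Lim) auto
  then show ?thesis unfolding dN0 by (simp add: N_def)
qed

lemma pole_case_diff:
  fixes A0 b0 b1 u e :: complex
  assumes "A0 \<noteq> 0" "b0 \<noteq> 0" "u \<noteq> 0" "e \<noteq> 0" "e \<noteq> 1"
  shows "(A0 + u * b1) / (u * b0) \<noteq> (A0 + (u * e) * b1) / ((u * e) * b0)"
proof
  assume "(A0 + u * b1) / (u * b0) = (A0 + (u * e) * b1) / ((u * e) * b0)"
  then have "(A0 + u * b1) * e = A0 + (u * e) * b1" using assms by (simp add: field_simps)
  then have "A0 * (e - 1) = 0" by (simp add: algebra_simps)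
  then show False using assms by simp
qed

lemma pole_limit:
  fixes g :: "complex \<Rightarrow> complex"
  assumes r: "r > 0" and gh: "g holomorphic_on (ball p r - {p})"
    and lim: "((\<lambda>z. (z - p) * g z) \<longlongrightarrow> l) (at p)"
    and res: "residue g p = - 1 / (2 * of_real pi * \<i>)"
  shows "l = - 1 / (2 * of_real pi * \<i>)"
proof -
  have "((\<lambda>w. g w * (w - p)) \<longlongrightarrow> l) (at p)" using lim by (simp add: mult.commute)
  then have "residue g p = l" using residue_simple'[OF open_ball _ gh] r by simp
  then show ?thesis using res by simp
qed

lemma g_nonzero_near:
  fixes g :: "complex \<Rightarrow> complex"
  assumes lim: "((\<lambda>z. (z - p) * g z) \<longlongrightarrow> l) (at p)" and l: "l \<noteq> 0"
  shows "\<exists>e>0. \<forall>z. z \<noteq> p \<and> dist z p < e \<longrightarrow> g z \<noteq> 0"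
proof -
  have "eventually (\<lambda>z. (z - p) * g z \<noteq> 0) (at p)"
    by (rule tendsto_imp_eventually_ne[OF lim l])
  then obtain e where e: "e > 0" "\<And>z. z \<noteq> p \<Longrightarrow> dist z p < e \<Longrightarrow> (z - p) * g z \<noteq> 0"
    unfolding eventually_at by blast
  show ?thesis
  proof (intro exI[of _ e] conjI allI impI)
    show "e > 0" by (rule e(1))
    fix z assume "z \<noteq> p \<and> dist z p < e"
    then have "(z - p) * g z \<noteq> 0" using e(2) by blast
    then show "g z \<noteq> 0" by auto
  qed
qed

lemma pole_structure:
  fixes g \<psi> :: "complex \<Rightarrow> complex"
  assumes r: "r > 0" and gh: "g holomorphic_on (ball p r - {p})"
    and lim: "((\<lambda>z. (z - p) * g z) \<longlongrightarrow> l) (at p)"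
    and l: "l = - 1 / (2 * of_real pi * \<i>)"
    and d\<psi>: "\<And>z. z \<in> ball p r - {p} \<Longrightarrow> (\<psi> has_field_derivative 2 * of_real pi * \<i> * g z * \<psi> z) (at z)"
    and nz: "\<And>z. z \<in> ball p r - {p} \<Longrightarrow> \<psi> z \<noteq> 0"
  shows "\<exists>\<Phi>. \<Phi> holomorphic_on ball p r \<and> (\<forall>z\<in>ball p r. \<Phi> z \<noteq> 0) \<and>
             (\<forall>z\<in>ball p r - {p}. \<Phi> z = (z - p) * \<psi> z)"
proof -
  define m where "m = (\<lambda>z. if z = p then l else (z - p) * g z)"
  have mh0: "m holomorphic_on (ball p r - {p})"
  proof (rule holomorphic_transform[of "\<lambda>z. (z - p) * g z"])
    show "(\<lambda>z. (z - p) * g z) holomorphic_on ball p r - {p}" by (intro holomorphic_intros gh)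
  qed (auto simp: m_def)
  have mlim: "(m \<longlongrightarrow> m p) (at p within ball p r)"
  proof -
    have "(m \<longlongrightarrow> l) (at p)"
      by (rule Lim_transform_eventually[OF lim]) (auto simp: m_def eventually_at_filter)
    moreover have "m p = l" by (simp add: m_def)
    ultimately show ?thesis using tendsto_mono[OF at_le[OF subset_UNIV]] by metis
  qed
  have mh: "m holomorphic_on ball p r"
    by (rule no_isolated_singularity'[of "{p}"]) (use mlim mh0 in auto)
  define j where "j = (\<lambda>z. if z = p then deriv m p else (m z - m p) / (z - p))"
  have jh: "j holomorphic_on ball p r"
    unfolding j_def by (rule pole_lemma[OF mh]) (use r in auto)
  obtain J where J0: "\<And>x. x \<in> ball p r \<Longrightarrow> (J has_field_derivative j x) (at x within ball p r)"
    using holomorphic_convex_primitive'[of "ball p r" j] jh by auto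
  have J: "(J has_field_derivative j x) (at x)" if "x \<in> ball p r" for x
    using J0[OF that] at_within_open[OF that open_ball] by simp
  have Jh: "J holomorphic_on ball p r"
    unfolding holomorphic_on_open[OF open_ball] using J by blast
  define H where "H = (\<lambda>z. (z - p) * \<psi> z * exp (- (2 * of_real pi * \<i>) * J z))"
  have dH: "(H has_field_derivative 0) (at z)" if z: "z \<in> ball p r - {p}" for z
  proof -
    have "(H has_field_derivative
        ((1 - 0) * \<psi> z + (2 * of_real pi * \<i> * g z * \<psi> z) * (z - p)) * exp (- (2 * of_real pi * \<i>) * J z)
        + (exp (- (2 * of_real pi * \<i>) * J z) * (- (2 * of_real pi * \<i>) * j z)) * ((z - p) * \<psi> z)) (at z)"
      unfolding H_def
      by (intro DERIV_mult DERIV_diff DERIV_ident DERIV_const d\<psi>[OF z] DERIV_chain2[OF DERIV_exp]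
            DERIV_cmult J) (use z in auto)
    moreover have "j z = ((z - p) * g z - l) / (z - p)" using z by (simp add: j_def m_def)
    ultimately show ?thesis using z l by (simp add: field_simps)
  qed
  have contH: "continuous_on (ball p r - {p}) H"
    using dH by (intro continuous_at_imp_continuous_on ballI DERIV_isCont) blast
  obtain c where c: "\<And>z. z \<in> ball p r - {p} \<Longrightarrow> H z = c"
    using DERIV_zero_connected_constant[of "ball p r - {p}" "{}" H] connected_punctured_ball[of p r]
      contH dH by auto
  define z0 where "z0 = p + of_real (r/2)"
  have z0: "z0 \<in> ball p r - {p}" using r by (auto simp: z0_def dist_norm)
  have "c \<noteq> 0" using c[OF z0] nz[OF z0] z0 by (auto simp: H_def)
  define \<Phi> where "\<Phi> = (\<lambda>z. c * exp (2 * of_real pi * \<i> * J z))"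
  have "\<Phi> holomorphic_on ball p r" unfolding \<Phi>_def by (intro holomorphic_intros Jh)
  moreover have "\<forall>z\<in>ball p r. \<Phi> z \<noteq> 0" using \<open>c \<noteq> 0\<close> by (simp add: \<Phi>_def)
  moreover have "\<forall>z\<in>ball p r - {p}. \<Phi> z = (z - p) * \<psi> z"
  proof
    fix z assume z: "z \<in> ball p r - {p}"
    have "(z - p) * \<psi> z * exp (- (2 * of_real pi * \<i>) * J z) = c" using c[OF z] by (simp add: H_def)
    then have "(z - p) * \<psi> z = c * exp (2 * of_real pi * \<i> * J z)"
      by (simp add: exp_minus field_simps)
    then show "\<Phi> z = (z - p) * \<psi> z" by (simp add: \<Phi>_def)
  qed
  ultimately show ?thesis by blast
qed

lemma lattice_closed:
  assumes tau: "Im \<tau> > 0"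
  shows "closed (lattice \<tau>)"
proof (rule discrete_imp_closed[of "min 1 (Im \<tau>)"])
  show "0 < min 1 (Im \<tau>)" using tau by simp
  show "\<forall>x\<in>lattice \<tau>. \<forall>y\<in>lattice \<tau>. dist y x < min 1 (Im \<tau>) \<longrightarrow> y = x"
  proof (intro ballI impI)
    fix x y assume x: "x \<in> lattice \<tau>" and y: "y \<in> lattice \<tau>" and d: "dist y x < min 1 (Im \<tau>)"
    obtain m1 n1 :: int where xe: "x = of_int m1 + of_int n1 * \<tau>" using x by (auto simp: lattice_def)
    obtain m2 n2 :: int where ye: "y = of_int m2 + of_int n2 * \<tau>" using y by (auto simp: lattice_def)
    have yx: "y - x = of_int (m2 - m1) + of_int (n2 - n1) * \<tau>" by (simp add: xe ye algebra_simps)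
    have "\<bar>Im (y - x)\<bar> \<le> norm (y - x)" by (rule abs_Im_le_cmod)
    also have "\<dots> < Im \<tau>" using d by (simp add: dist_norm)
    finally have "\<bar>real_of_int (n2 - n1)\<bar> * Im \<tau> < 1 * Im \<tau>" unfolding yx using tau by (simp add: abs_mult)
    then have "\<bar>real_of_int (n2 - n1)\<bar> < 1" using tau by (simp only: mult_less_cancel_right)
    then have n: "n2 = n1" by linarith
    have "norm (of_int (m2 - m1) :: complex) < 1" using d yx n by (simp add: dist_norm)
    then have "\<bar>real_of_int (m2 - m1)\<bar> < 1" by (simp only: norm_of_int)
    then have "m2 = m1" by linarith
    then show "y = x" using n xe ye by simp
  qed
qed

lemma cut_closed:
  assumes tau: "Im \<tau> > 0" and a: "valid_path \<alpha>" and b: "valid_path \<beta>"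
  shows "closed (cut_set \<tau> \<alpha> \<beta>)"
proof -
  have K: "compact (path_image \<alpha> \<union> path_image \<beta>)"
    using a b by (intro compact_Un compact_path_image valid_path_imp_path)
  have "cut_set \<tau> \<alpha> \<beta> = (\<Union>x\<in>lattice \<tau>. \<Union>y\<in>path_image \<alpha> \<union> path_image \<beta>. {x + y})"
    unfolding cut_set_def by blast
  then show ?thesis using closed_compact_sums[OF lattice_closed[OF tau] K] by simp
qed

theorem lemma6p1:
  fixes \<tau> p0 p1 p2 :: complex
    and g t :: "complex \<Rightarrow> complex"
    and \<alpha> \<beta> :: "real \<Rightarrow> complex"
    and r1 r2 :: real
    and D U2 V :: "complex set"
  assumes tau: "Im \<tau> > 0"
    and distinct: "p1 - p2 \<notin> lattice \<tau>"
    \<comment> \<open>rho^* eta = g dz: a doubly periodic meromorphic differential\<close>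
    and g_hol: "g holomorphic_on (- pole_set \<tau> p1 p2)"
    and g_per: "\<And>z. z \<notin> pole_set \<tau> p1 p2 \<Longrightarrow> g (z + 1) = g z \<and> g (z + \<tau>) = g z"
    and g_simple1: "\<exists>l. ((\<lambda>z. (z - p1) * g z) \<longlongrightarrow> l) (at p1)"
    and g_simple2: "\<exists>l. ((\<lambda>z. (z - p2) * g z) \<longlongrightarrow> l) (at p2)"
    and g_res1: "residue g p1 = 1 / (2 * of_real pi * \<i>)"
    and g_res2: "residue g p2 = - residue g p1"
    \<comment> \<open>canonical homology basis alpha, beta (lifted), avoiding P1, P2\<close>
    and alpha: "valid_path \<alpha>" "pathfinish \<alpha> = pathstart \<alpha> + 1"
    and beta: "valid_path \<beta>" "pathfinish \<beta> = pathstart \<beta> + \<tau>"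
    and meet: "pathstart \<alpha> = pathstart \<beta>"
    and avoid: "(path_image \<alpha> \<union> path_image \<beta>) \<inter> pole_set \<tau> p1 p2 = {}"
    and per_alpha: "(g has_contour_integral (of_real r1)) \<alpha>"
    and per_beta: "(g has_contour_integral (of_real r2)) \<beta>"
    \<comment> \<open>X-circ: lift D of the domain obtained by cutting along alpha, beta\<close>
    and D_comp: "D \<in> components (- cut_set \<tau> \<alpha> \<beta>)"
    and D_sc: "simply_connected D"
    and D_inj: "\<And>z w. z \<in> D \<Longrightarrow> w \<in> D \<Longrightarrow> z - w \<in> lattice \<tau> \<Longrightarrow> z = w"
    and pts: "p1 \<in> D" "p2 \<in> D" "p0 \<in> D" "p0 \<noteq> p1" "p0 \<noteq> p2"
    \<comment> \<open>U2: small disk around P2 in X-circ, t a local coordinate on its closure\<close>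
    and U2: "open U2" "connected U2" "bounded U2" "p2 \<in> U2" "closure U2 \<subseteq> D" "p1 \<notin> closure U2"
    and V: "open V" "closure U2 \<subseteq> V" "V \<subseteq> D" "t holomorphic_on V" "inj_on t V"
    and t0: "t p2 = 0"
  shows "\<exists>U20. open U20 \<and> p2 \<in> U20 \<and> compact (closure U20) \<and> closure U20 \<subseteq> U2 \<and>
           (\<forall>P\<in>U20. period_group \<tau> r1 r2 g (D - pole_set \<tau> p1 p2) p0 t (closure U2) (t P)
                       = {0} \<times> \<int>)"
proof -
  define K where "K = closure U2"
  define S where "S = D - pole_set \<tau> p1 p2"
  define f where "f = theta_char \<tau> 0 0"
  define h where "h = theta_char \<tau> (- of_real r1) (of_real r2)"
  define \<psi> where "\<psi> = (\<lambda>z. ee (phi2 g S p0 z))"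
  define FT where "FT = frakT \<tau> r1 r2 g S p0"
  define H3 where "H3 = h3 \<tau> r1 r2 g S p0 t K"
  have lat0: "0 \<in> lattice \<tau>" unfolding lattice_def by (auto intro!: exI[of _ 0])
  have p12: "p1 \<noteq> p2" using distinct lat0 by auto
  have oD: "open D"
    using open_components[OF open_Compl[OF cut_closed[OF tau alpha(1) beta(1)]] D_comp] .
  have cD: "connected D" using in_components_connected[OF D_comp] .
  have poles: "z \<in> pole_set \<tau> p1 p2 \<longleftrightarrow> z = p1 \<or> z = p2" if "z \<in> D" for z
  proof
    assume "z \<in> pole_set \<tau> p1 p2"
    then obtain l where "l \<in> lattice \<tau>" "z = p1 + l \<or> z = p2 + l" unfolding pole_set_def by blast
    then show "z = p1 \<or> z = p2" using D_inj[OF that pts(1)] D_inj[OF that pts(2)] by auto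
  next
    assume "z = p1 \<or> z = p2"
    then show "z \<in> pole_set \<tau> p1 p2" unfolding pole_set_def using lat0 by force
  qed
  have SD: "S = D - {p1, p2}" unfolding S_def using poles by blast
  have gh: "g holomorphic_on (D - {p1, p2})"
    by (rule holomorphic_on_subset[OF g_hol]) (use poles in blast)
  have res2: "residue g p2 = - 1 / (2 * of_real pi * \<i>)" using g_res1 g_res2 by simp
  have p0S: "p0 \<in> D - {p1, p2}" using pts by simp
  have d\<psi>: "(\<psi> has_field_derivative 2 * of_real pi * \<i> * g z * \<psi> z) (at z)" if "z \<in> D - {p1, p2}" for z
    unfolding \<psi>_def SD by (rule psi_deriv[OF oD cD D_sc p12 gh g_res1 res2 p0S that])
  have \<psi>nz: "\<psi> z \<noteq> 0" for z unfolding \<psi>_def by (rule ee_nonzero)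
  have FT_eq: "FT c z = f (z - p0 - fst c) + h (z - p0 - fst c) * (\<psi> z * ee (- snd c))" for c z
  proof -
    have "ee (phi2 g S p0 z - snd c) = \<psi> z * ee (- snd c)"
      unfolding \<psi>_def by (simp only: diff_conv_add_uminus ee_add)
    then show ?thesis unfolding FT_def frakT_def Theta_def f_def h_def by simp
  qed
  have H3_cong: "H3 (c1, c2) s = H3 (c1, c2') s" if "ee (- c2) = ee (- c2')" for c1 c2 c2' s
  proof -
    have "FT (c1, c2) = FT (c1, c2')" by (rule ext) (simp add: FT_eq that)
    then show ?thesis unfolding H3_def h3_def FT_def by simp
  qed
  obtain r0 where r0: "r0 > 0" "ball p2 r0 \<subseteq> U2" using U2(1,4) openE by blast
  have U2D: "U2 \<subseteq> D - {p1}" using U2(5,6) closure_subset by blast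
  have ballS: "ball p2 r0 - {p2} \<subseteq> D - {p1, p2}" using r0 U2D by blast
  obtain l where lim: "((\<lambda>z. (z - p2) * g z) \<longlongrightarrow> l) (at p2)" using g_simple2 by blast
  have ghb: "g holomorphic_on (ball p2 r0 - {p2})" by (rule holomorphic_on_subset[OF gh ballS])
  have l: "l = - 1 / (2 * of_real pi * \<i>)" by (rule pole_limit[OF r0(1) ghb lim res2])
  obtain \<epsilon> where \<epsilon>: "\<epsilon> > 0" "\<And>z. z \<noteq> p2 \<and> dist z p2 < \<epsilon> \<longrightarrow> g z \<noteq> 0"
    using g_nonzero_near[OF lim] l by auto
  obtain \<Phi>2 where \<Phi>2: "\<Phi>2 holomorphic_on ball p2 r0" "\<forall>z\<in>ball p2 r0. \<Phi>2 z \<noteq> 0"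
      "\<forall>z\<in>ball p2 r0 - {p2}. \<Phi>2 z = (z - p2) * \<psi> z"
    using pole_structure[OF r0(1) ghb lim l, of \<psi>] d\<psi> \<psi>nz ballS by blast
  have KV: "K \<subseteq> V" using V(2) K_def by simp
  have U2K: "U2 \<subseteq> K" using closure_subset K_def by simp
  have tU: "t holomorphic_on U2" using holomorphic_on_subset[OF V(4)] KV U2K by blast
  have tinj: "inj_on t U2" using inj_on_subset[OF V(5)] KV U2K by blast
  have tinjK: "inj_on t K" using inj_on_subset[OF V(5)] KV by blast
  obtain zinv where zinv: "zinv holomorphic_on t ` U2" "\<And>z. z \<in> U2 \<Longrightarrow> deriv t z * deriv zinv (t z) = 1"
      "\<And>z. z \<in> U2 \<Longrightarrow> zinv (t z) = z"
    using holomorphic_has_inverse[OF tU U2(1) tinj] by blast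
  have otU: "open (t ` U2)" by (rule open_mapping_thm3[OF tU U2(1) tinj])
  have invK: "inv_into K t y = zinv y" if "y \<in> t ` U2" for y
    using that zinv(3) tinjK U2K by auto
  have zinvU: "zinv y \<in> U2" "t (zinv y) = y" if "y \<in> t ` U2" for y
    using that zinv(3) by auto
  have dzinv: "(zinv has_field_derivative deriv zinv y) (at y)" if "y \<in> t ` U2" for y
    using holomorphic_derivI[OF zinv(1) otU that, of UNIV] by simp
  have dz_nz: "deriv zinv y \<noteq> 0" if "y \<in> t ` U2" for y
    using that zinv(2) by fastforce
  define \<rho> where "\<rho> = min \<epsilon> r0 / 2"
  have \<rho>: "\<rho> > 0" "\<rho> < r0" "\<rho> < \<epsilon>" using \<epsilon>(1) r0(1) by (auto simp: \<rho>_def)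
  have fholo: "f holomorphic_on UNIV" unfolding f_def by (rule theta00_holo[OF tau])
  have hholo: "h holomorphic_on UNIV" unfolding h_def by (rule theta_holo[OF tau])
  have H3_unf: "H3 c s = (if s = 0 then Lim (at 0) (\<lambda>x. deriv (\<lambda>y. FT c (inv_into K t y)) x / FT c (inv_into K t x) + 1 / x)
      else deriv (\<lambda>y. FT c (inv_into K t y)) s / FT c (inv_into K t s) + 1 / s)" for c s
    unfolding H3_def h3_def FT_def Let_def by simp
  have KEY: "\<exists>c1 c2. H3 (c1, c2) (t P) \<noteq> H3 (c1, c2 + a) (t P)"
    if P: "P \<in> ball p2 \<rho>" and a: "a \<notin> \<int>" for P a
  proof -
    define e where "e = ee (- a)"
    have e1: "e \<noteq> 1"
    proof
      assume "e = 1"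
      then have "- a \<in> \<int>" unfolding e_def by (rule ee_eq_1)
      then have "- (- a) \<in> \<int>" by (rule Ints_minus)
      then show False using a by simp
    qed
    have e0: "e \<noteq> 0" unfolding e_def by (rule ee_nonzero)
    have PU: "P \<in> U2" using P \<rho> r0 by auto
    have sU: "t P \<in> t ` U2" using PU by simp
    have zs: "zinv (t P) = P" using zinv(3)[OF PU] .
    show ?thesis
    proof (cases "P = p2")
      case False
      then have s0: "t P \<noteq> 0" using tinj PU U2(4) t0 by (metis inj_onD)
      have gP: "g P \<noteq> 0" using \<epsilon>(2)[of P] P \<rho> False by (simp add: dist_commute)
      have PS: "P \<in> D - {p1, p2}" using PU U2D False by auto
      define G where "G = 2 * of_real pi * \<i> * g P"
      have G0: "G \<noteq> 0" using gP by (simp add: G_def)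
      obtain w where w: "deriv f w * h w - f w * deriv h w - G * f w * h w \<noteq> 0"
        using wronskian_nonzero[OF tau G0, of "- r1" r2] unfolding f_def h_def by auto
      define c1 where "c1 = P - p0 - w"
      have wP: "zinv (t P) - p0 - c1 = w" using zs by (simp add: c1_def)
      define A where "A = (\<lambda>y. f (zinv y - p0 - c1))"
      define B where "B = (\<lambda>y. h (zinv y - p0 - c1) * \<psi> (zinv y))"
      define cc where "cc = (\<lambda>u::complex. - Ln u / (2 * of_real pi * \<i>))"
      have ecc: "ee (- cc u) = u" if "u \<noteq> 0" for u
        using that unfolding cc_def ee_def by simp
      define T where "T = (\<lambda>u y. FT (c1, cc u) (inv_into K t y))"
      have TA: "T u y = A y + u * B y" if "u \<noteq> 0" "y \<in> t ` U2" for u y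
        unfolding T_def A_def B_def using invK[OF that(2)] FT_eq[of "(c1, cc u)"] ecc[OF that(1)]
        by (simp add: algebra_simps)
      define zd where "zd = deriv zinv (t P)"
      have zd0: "zd \<noteq> 0" unfolding zd_def by (rule dz_nz[OF sU])
      have dzl: "((\<lambda>y. zinv y - p0 - c1) has_field_derivative zd) (at (t P))"
        using DERIV_diff[OF DERIV_diff[OF dzinv[OF sU] DERIV_const[of p0]] DERIV_const[of c1]]
        unfolding zd_def by simp
      have dA: "(A has_field_derivative deriv f w * zd) (at (t P))"
        unfolding A_def using DERIV_chain2[OF entire_deriv[OF fholo] dzl] wP by simp
      have dh: "((\<lambda>y. h (zinv y - p0 - c1)) has_field_derivative deriv h w * zd) (at (t P))"
        using DERIV_chain2[OF entire_deriv[OF hholo] dzl] wP by simp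
      have dps: "((\<lambda>y. \<psi> (zinv y)) has_field_derivative (G * \<psi> P) * zd) (at (t P))"
      proof -
        have PS': "zinv (t P) \<in> D - {p1, p2}" using PS zs by simp
        have "((\<lambda>y. \<psi> (zinv y)) has_field_derivative
            (2 * of_real pi * \<i> * g (zinv (t P)) * \<psi> (zinv (t P))) * deriv zinv (t P)) (at (t P))"
          by (rule DERIV_chain2[OF d\<psi>[OF PS'] dzinv[OF sU]])
        then show ?thesis unfolding zs zd_def[symmetric] G_def[symmetric] by simp
      qed
      have dB: "(B has_field_derivative (deriv h w * zd) * \<psi> P + (G * \<psi> P * zd) * h w) (at (t P))"
        unfolding B_def using DERIV_mult[OF dh dps] zs wP by (simp add: mult.commute)
      have As: "A (t P) = f w" unfolding A_def using wP by simp
      have Bs: "B (t P) = h w * \<psi> P" unfolding B_def using wP zs by simp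
      have W: "(deriv f w * zd) * B (t P) - A (t P) * ((deriv h w * zd) * \<psi> P + (G * \<psi> P * zd) * h w) \<noteq> 0"
      proof -
        have "(deriv f w * zd) * B (t P) - A (t P) * ((deriv h w * zd) * \<psi> P + (G * \<psi> P * zd) * h w)
            = zd * \<psi> P * (deriv f w * h w - f w * deriv h w - G * f w * h w)"
          unfolding As Bs by (simp add: algebra_simps)
        then show ?thesis using zd0 \<psi>nz[of P] w by simp
      qed
      obtain u where u: "u \<noteq> 0"
        "deriv (T u) (t P) / T u (t P) + 1 / t P \<noteq> deriv (T (u * e)) (t P) / T (u * e) (t P) + 1 / t P"
        using mobius_case[OF otU sU TA dA dB W e1 e0] by blast
      have ue: "u * e \<noteq> 0" using u(1) e0 by simp
      have h1: "H3 (c1, cc u) (t P) = deriv (T u) (t P) / T u (t P) + 1 / t P"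
        unfolding H3_unf T_def using s0 by simp
      have "ee (- (cc u + a)) = ee (- cc u + - a)" by (simp add: algebra_simps)
      also have "\<dots> = u * e" unfolding e_def by (simp only: ee_add ecc[OF u(1)])
      also have "\<dots> = ee (- cc (u * e))" using ecc[OF ue] by simp
      finally have "ee (- (cc u + a)) = ee (- cc (u * e))" .
      then have "H3 (c1, cc u + a) (t P) = H3 (c1, cc (u * e)) (t P)" by (rule H3_cong)
      also have "\<dots> = deriv (T (u * e)) (t P) / T (u * e) (t P) + 1 / t P"
        unfolding H3_unf T_def using s0 by simp
      finally show ?thesis using h1 u(2) by metis
    next
      case True
      have s0: "t P = 0" using True t0 by simp
      obtain w0 where w0: "f w0 \<noteq> 0" "h w0 \<noteq> 0"
        using theta_both_nonzero[OF tau] unfolding f_def h_def by blast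
      define c1 where "c1 = p2 - p0 - w0"
      have U0: "0 \<in> t ` U2" using U2(4) t0 by (metis image_eqI)
      have z0: "zinv 0 = p2" using zinv(3)[OF U2(4)] t0 by simp
      define \<zeta> where "\<zeta> = (\<lambda>y. if y = 0 then deriv zinv 0 else (zinv y - zinv 0) / (y - 0))"
      have \<zeta>h: "\<zeta> holomorphic_on t ` U2"
        unfolding \<zeta>_def by (rule pole_lemma[OF zinv(1)]) (use U0 otU in \<open>simp add: interior_open\<close>)
      have \<zeta>0: "\<zeta> 0 \<noteq> 0" using dz_nz[OF U0] by (simp add: \<zeta>_def)
      have c\<zeta>: "isCont \<zeta> 0"
        using holomorphic_on_imp_continuous_on[OF \<zeta>h] otU U0 continuous_on_eq_continuous_at by blast
      have cz: "isCont zinv 0"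
        using holomorphic_on_imp_continuous_on[OF zinv(1)] otU U0 continuous_on_eq_continuous_at by blast
      have ev: "eventually (\<lambda>y. y \<in> t ` U2 \<and> \<zeta> y \<noteq> 0 \<and> zinv y \<in> ball p2 r0) (at 0)"
      proof -
        have "eventually (\<lambda>y. y \<in> t ` U2) (at 0)" by (rule eventually_at_in_open'[OF otU U0])
        moreover have "eventually (\<lambda>y. \<zeta> y \<noteq> 0) (at 0)"
          using c\<zeta> \<zeta>0 unfolding isCont_def by (rule tendsto_imp_eventually_ne)
        moreover have "eventually (\<lambda>y. zinv y \<in> ball p2 r0) (at 0)"
          using cz unfolding isCont_def z0 by (rule topological_tendstoD) (use r0 in auto)
        ultimately show ?thesis by eventually_elim auto
      qed
      then obtain \<delta> where \<delta>: "\<delta> > 0"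
        "\<And>y. y \<noteq> 0 \<Longrightarrow> dist y 0 < \<delta> \<Longrightarrow> y \<in> t ` U2 \<and> \<zeta> y \<noteq> 0 \<and> zinv y \<in> ball p2 r0"
        unfolding eventually_at by auto
      define Om where "Om = ball (0::complex) \<delta>"
      have OmP: "y \<in> t ` U2 \<and> \<zeta> y \<noteq> 0 \<and> zinv y \<in> ball p2 r0" if "y \<in> Om" for y
      proof (cases "y = 0")
        case True then show ?thesis using U0 \<zeta>0 z0 r0 by simp
      next
        case False then show ?thesis using \<delta>(2)[of y] that by (simp add: Om_def dist_commute)
      qed
      have Om0: "0 \<in> Om" using \<delta> by (simp add: Om_def)
      have OmU: "Om \<subseteq> t ` U2" using OmP by blast
      have zOm: "zinv holomorphic_on Om" by (rule holomorphic_on_subset[OF zinv(1) OmU])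
      have zl: "(\<lambda>y. zinv y - p0 - c1) holomorphic_on Om" by (intro holomorphic_intros zOm)
      define A where "A = (\<lambda>y. f (zinv y - p0 - c1))"
      define \<beta> where "\<beta> = (\<lambda>y. h (zinv y - p0 - c1) * \<Phi>2 (zinv y) / \<zeta> y)"
      have hA: "A holomorphic_on Om"
        using holomorphic_on_compose[OF zl holomorphic_on_subset[OF fholo subset_UNIV]]
        unfolding A_def o_def .
      have hh': "(\<lambda>y. h (zinv y - p0 - c1)) holomorphic_on Om"
        using holomorphic_on_compose[OF zl holomorphic_on_subset[OF hholo subset_UNIV]]
        unfolding o_def .
      have h\<Phi>: "(\<lambda>y. \<Phi>2 (zinv y)) holomorphic_on Om"
        using holomorphic_on_compose_gen[OF zOm \<Phi>2(1)] OmP unfolding o_def by blast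
      have h\<zeta>: "\<zeta> holomorphic_on Om" by (rule holomorphic_on_subset[OF \<zeta>h OmU])
      have h\<beta>: "\<beta> holomorphic_on Om"
        unfolding \<beta>_def by (intro holomorphic_intros hh' h\<Phi> h\<zeta>) (use OmP in auto)
      have A0: "A 0 = f w0" unfolding A_def z0 c1_def by simp
      have \<beta>0: "\<beta> 0 \<noteq> 0"
        unfolding \<beta>_def z0 using w0 \<Phi>2(2) r0 \<zeta>0 by (simp add: c1_def)
      have TA: "FT (c1, c2) (inv_into K t y) = A y + ee (- c2) * \<beta> y / y"
        if y: "y \<in> Om" "y \<noteq> 0" for y c2
      proof -
        have yU: "y \<in> t ` U2" and \<zeta>y: "\<zeta> y \<noteq> 0" and zb: "zinv y \<in> ball p2 r0" using OmP[OF y(1)] by auto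
        have zne: "zinv y \<noteq> p2"
        proof
          assume "zinv y = p2"
          then have "y = t p2" using zinvU(2)[OF yU] by simp
          then show False using t0 y(2) by simp
        qed
        have \<zeta>y': "\<zeta> y = (zinv y - p2) / y" using y(2) z0 by (simp add: \<zeta>_def)
        have \<Phi>y: "\<Phi>2 (zinv y) = (zinv y - p2) * \<psi> (zinv y)" using \<Phi>2(3) zb zne by blast
        have "FT (c1, c2) (inv_into K t y) = A y + h (zinv y - p0 - c1) * (\<psi> (zinv y) * ee (- c2))"
          unfolding invK[OF yU] FT_eq A_def by simp
        also have "\<dots> = A y + ee (- c2) * \<beta> y / y"
          unfolding \<beta>_def \<Phi>y \<zeta>y' using zne y(2) by (simp add: field_simps)
        finally show ?thesis .
      qed
      have L1: "H3 (c1, 0) (t P) = (A 0 + 1 * deriv \<beta> 0) / (1 * \<beta> 0)"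
      proof -
        have "Lim (at 0) (\<lambda>x. deriv (\<lambda>y. FT (c1, 0) (inv_into K t y)) x / FT (c1, 0) (inv_into K t x) + 1 / x)
            = (A 0 + 1 * deriv \<beta> 0) / (1 * \<beta> 0)"
          by (rule pole_case[OF _ Om0 hA h\<beta> _ _ \<beta>0]) (use TA[of _ 0] in \<open>auto simp: Om_def ee_def\<close>)
        then show ?thesis unfolding H3_unf using s0 by simp
      qed
      have L2: "H3 (c1, 0 + a) (t P) = (A 0 + e * deriv \<beta> 0) / (e * \<beta> 0)"
      proof -
        have "Lim (at 0) (\<lambda>x. deriv (\<lambda>y. FT (c1, a) (inv_into K t y)) x / FT (c1, a) (inv_into K t x) + 1 / x)
            = (A 0 + e * deriv \<beta> 0) / (e * \<beta> 0)"
          by (rule pole_case[OF _ Om0 hA h\<beta> _ e0 \<beta>0]) (use TA[of _ a] in \<open>auto simp: Om_def e_def\<close>)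
        then show ?thesis unfolding H3_unf using s0 by simp
      qed
      have "(A 0 + 1 * deriv \<beta> 0) / (1 * \<beta> 0) \<noteq> (A 0 + (1 * e) * deriv \<beta> 0) / ((1 * e) * \<beta> 0)"
        by (rule pole_case_diff) (use w0 A0 \<beta>0 e0 e1 in auto)
      then have "H3 (c1, 0) (t P) \<noteq> H3 (c1, 0 + a) (t P)" unfolding L1 L2 by simp
      then show ?thesis by blast
    qed
  qed
  have PG: "period_group \<tau> r1 r2 g S p0 t K (t P) = {0} \<times> \<int>" if P: "P \<in> ball p2 \<rho>" for P
  proof (rule set_eqI, rule iffI)
    fix ct :: "complex \<times> complex" assume "ct \<in> period_group \<tau> r1 r2 g S p0 t K (t P)"
    then have A: "fst ct = 0 \<and> (\<forall>a b. H3 (a, b + snd ct) (t P) = H3 (a, b) (t P))"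
      unfolding period_group_def dprime_def H3_def by auto
    have f0: "fst ct = 0" using A by simp
    show "ct \<in> {0} \<times> \<int>"
    proof (rule ccontr)
      assume "ct \<notin> {0} \<times> \<int>"
      then have "snd ct \<notin> \<int>" using f0 by (cases ct) auto
      then obtain c1 c2 where ne: "H3 (c1, c2) (t P) \<noteq> H3 (c1, c2 + snd ct) (t P)"
        using KEY[OF P] by blast
      have "H3 (c1, c2 + snd ct) (t P) = H3 (c1, c2) (t P)"
        using A f0 by simp
      then show False using ne by simp
    qed
  next
    fix ct :: "complex \<times> complex" assume "ct \<in> {0} \<times> \<int>"
    then obtain k :: complex where ct: "ct = (0, k)" "k \<in> \<int>" by auto
    have E: "H3 (a, b + k) (t P) = H3 (a, b) (t P)" for a b :: complex
    proof (rule H3_cong)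
      have "- k \<in> \<int>" using ct(2) by simp
      have "ee (- (b + k)) = ee (- b + - k)" by (simp add: algebra_simps)
      also have "\<dots> = ee (- b)" using \<open>- k \<in> \<int>\<close> by (simp only: ee_add ee_int mult_1_right)
      finally show "ee (- (b + k)) = ee (- b)" .
    qed
    then show "ct \<in> period_group \<tau> r1 r2 g S p0 t K (t P)"
      unfolding period_group_def dprime_def ct using E[unfolded H3_def] by simp
  qed
  show ?thesis
  proof (intro exI[of _ "ball p2 \<rho>"] conjI)
    show "open (ball p2 \<rho>)" by simp
    show "p2 \<in> ball p2 \<rho>" using \<rho> by simp
    show "compact (closure (ball p2 \<rho>))" using \<rho> by simp
    show "closure (ball p2 \<rho>) \<subseteq> U2" using \<rho> r0 by auto
    show "\<forall>P\<in>ball p2 \<rho>. period_group \<tau> r1 r2 g (D - pole_set \<tau> p1 p2) p0 t (closure U2) (t P) = {0} \<times> \<int>"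
      using PG unfolding S_def K_def by blast
  qed
qed

end
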